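(* Let $S$ be a semigroup and let $M = S\cup\{1_M\}$ be the monoid obtained from $S$ by adjoining an identity element $1_M\notin S$ (so $1_M s = s1_M = s$ for all $s\in M$ and $S$ is a subsemigroup of $M$). Then $M$ is sofic.
   Context: A semigroup is a set with an associative binary operation. For a non-empty finite set $X$, $\mathrm{Map}(X)$ is the monoid of all maps $X\to X$ under composition (identity $\mathrm{Id}_X$) with the Hamming metric $d_X(f,g)=|\{x\in X : f(x)\ne g(x)\}|/|X|$. For a monoid $M$, finite $K\subset M$ and $\varepsilon,\alpha>0$, a map $\varphi\colon M\to\mathrm{Map}(X)$ is a $(K,\varepsilon)$-morphism if $d_X(\varphi(k_1k_2),\varphi(k_1)\varphi(k_2))\le\varepsilon$ for all $k_1,k_2\in K$ and $d_X(\varphi(1_M),\mathrm{Id}_X)\le\varepsilon$; it is $(K,\alpha)$-injective if $d_X(\varphi(k_1),\varphi(k_2))\ge\alpha$ for all distinct $k_1,k_2\in K$. $M$ is sofic if for every finite $K\subset M$ and every $\varepsilon>0$ there exist a non-empty finite set $X$ and a $(K,1-\varepsilon)$-injective $(K,\varepsilon)$-morphism $\varphi\colon M\to\mathrm{Map}(X)$. *)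

theory Defs
  imports Complex_Main
begin

text \<open>Normalized Hamming distance on maps of a finite set X (maps represented as
  functions nat => nat whose values matter only on X).\<close>
definition ham_dist :: "nat set \<Rightarrow> (nat \<Rightarrow> nat) \<Rightarrow> (nat \<Rightarrow> nat) \<Rightarrow> real" where
  "ham_dist X f g = real (card {x \<in> X. f x \<noteq> g x}) / real (card X)"

definition sofic_monoid :: "('m \<Rightarrow> 'm \<Rightarrow> 'm) \<Rightarrow> 'm \<Rightarrow> bool" where
  "sofic_monoid mult one \<longleftrightarrow>
    (\<forall>K :: 'm set. \<forall>\<epsilon> :: real. finite K \<and> \<epsilon> > 0 \<longrightarrow>
      (\<exists>(X :: nat set) (\<phi> :: 'm \<Rightarrow> nat \<Rightarrow> nat).
          finite X \<and> X \<noteq> {} \<and>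
          (\<forall>m. \<phi> m ` X \<subseteq> X) \<and>
          (\<forall>k1\<in>K. \<forall>k2\<in>K. ham_dist X (\<phi> (mult k1 k2)) (\<phi> k1 \<circ> \<phi> k2) \<le> \<epsilon>) \<and>
          ham_dist X (\<phi> one) id \<le> \<epsilon> \<and>
          (\<forall>k1\<in>K. \<forall>k2\<in>K. k1 \<noteq> k2 \<longrightarrow> ham_dist X (\<phi> k1) (\<phi> k2) \<ge> 1 - \<epsilon>)))"

text \<open>The monoid S \<union> {1} obtained by adjoining an identity: elements Some s for s in S,
  and None for the new identity.\<close>
fun adjoin_mult :: "'a::semigroup_mult option \<Rightarrow> 'a option \<Rightarrow> 'a option" where
  "adjoin_mult None y = y"
| "adjoin_mult (Some a) None = Some a"
| "adjoin_mult (Some a) (Some b) = Some (a * b)"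

end

theory Submission
  imports Defs
begin

lemma hd_le:
  assumes "finite X" "{x\<in>X. f x \<noteq> g x} \<subseteq> {..<n}"
  shows "ham_dist X f g \<le> real n / real (card X)"
proof -
  have "card {x\<in>X. f x \<noteq> g x} \<le> card {..<n}"
    by (rule card_mono) (use assms in auto)
  then show ?thesis unfolding ham_dist_def
    by (simp add: divide_right_mono)
qed

lemma hd_ge:
  assumes "finite X" "B \<subseteq> {x\<in>X. f x \<noteq> g x}"
  shows "ham_dist X f g \<ge> real (card B) / real (card X)"
proof -
  have "card B \<le> card {x\<in>X. f x \<noteq> g x}"
    by (rule card_mono) (use assms in auto)
  then show ?thesis unfolding ham_dist_def
    by (simp add: divide_right_mono)
qed

lemma arith_aux:
  fixes e :: real and n N :: nat
  assumes "e > 0" "N = nat \<lceil>real n / e\<rceil> + 1"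
  shows "real n / real (n + N) \<le> e" "1 - e \<le> real N / real (n + N)"
proof -
  have "real n / e \<le> real (nat \<lceil>real n / e\<rceil>)" by (rule real_nat_ceiling_ge)
  then have "real n / e \<le> real N" using assms(2) by simp
  then have "real n \<le> e * real N" using assms(1) by (simp add: field_simps)
  also have "\<dots> \<le> e * real (n + N)" using assms(1) by simp
  finally have a: "real n \<le> e * real (n + N)" .
  have pos: "real (n + N) > 0" using assms(2) by simp
  show "real n / real (n + N) \<le> e" using a pos by (simp add: divide_simps)
  have "real N / real (n + N) = 1 - real n / real (n + N)" using pos by (simp add: field_simps)
  then show "1 - e \<le> real N / real (n + N)" using \<open>real n / real (n + N) \<le> e\<close> by simp
qed

theorem proposition4p8:
  shows "sofic_monoid (adjoin_mult :: 'a::semigroup_mult option \<Rightarrow> 'a option \<Rightarrow> 'a option) None"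
  unfolding sofic_monoid_def
proof (intro allI impI, elim conjE)
  fix K :: "'a option set" and e :: real
  assume fK: "finite K" and e: "e > 0"
  define A where "A = Some -` K"
  have fA: "finite A" unfolding A_def by (rule finite_vimageI[OF fK]) simp
  define T where "T = A \<union> (\<lambda>(s,t). s*t) ` (A \<times> A)"
  have fT: "finite T" unfolding T_def using fA by simp
  obtain l where l: "distinct l" "set l = T" using finite_distinct_list[OF fT] by blast
  define n where "n = length l"
  define N :: nat where "N = nat \<lceil>real n / e\<rceil> + 1"
  define X where "X = {..<n+N}"
  have bij: "bij_betw (nth l) {..<n} T" using bij_betw_nth[OF l(1)] l(2) n_def by simp
  define enc where "enc = inv_into {..<n} (nth l)"
  have enc_lt: "enc s < n" if "s \<in> T" for s
    using bij that unfolding enc_def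
    by (metis bij_betw_def inv_into_into lessThan_iff)
  have enc_nth: "l ! enc s = s" if "s \<in> T" for s
    using bij that unfolding enc_def by (metis bij_betw_def f_inv_into_f)
  have AT: "s \<in> T" if "Some s \<in> K" for s using that unfolding T_def A_def by auto
  have ATT: "s * t \<in> T" if "Some s \<in> K" "Some t \<in> K" for s t
    using that unfolding T_def A_def by force
  define phi :: "'a option \<Rightarrow> nat \<Rightarrow> nat" where
    "phi m x = (case m of None \<Rightarrow> x | Some s \<Rightarrow>
        if n \<le> x then (if s \<in> T then enc s else x)
        else (if s * l!x \<in> T then enc (s * l!x) else x))" for m x
  have fX: "finite X" "card X = n + N" unfolding X_def by auto
  have neX: "X \<noteq> {}" unfolding X_def N_def by auto
  have into: "\<forall>m. phi m ` X \<subseteq> X"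
  proof (intro allI subsetI)
    fix m y assume "y \<in> phi m ` X"
    then obtain x where x: "x \<in> X" "y = phi m x" by auto
    show "y \<in> X"
    proof (cases m)
      case None then show ?thesis using x by (simp add: phi_def)
    next
      case (Some s)
      have "enc u < n + N" if "u \<in> T" for u using enc_lt[OF that] by simp
      then show ?thesis using x Some unfolding phi_def X_def by auto
    qed
  qed
  have ar: "real n / real (n + N) \<le> e" "1 - e \<le> real N / real (n + N)"
    using arith_aux[OF e N_def] by auto
  have mult: "\<forall>k1\<in>K. \<forall>k2\<in>K. ham_dist X (phi (adjoin_mult k1 k2)) (phi k1 \<circ> phi k2) \<le> e"
  proof (intro ballI)
    fix k1 k2 assume k: "k1 \<in> K" "k2 \<in> K"
    have eq: "phi (adjoin_mult k1 k2) x = phi k1 (phi k2 x)" if "n \<le> x" for x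
    proof (cases k1)
      case None then show ?thesis by (simp add: phi_def)
    next
      case (Some s)
      show ?thesis
      proof (cases k2)
        case None then show ?thesis using Some by (simp add: phi_def)
      next
        case (Some t)
        have s: "Some s \<in> K" and t: "Some t \<in> K" using k \<open>k1 = Some s\<close> Some by auto
        show ?thesis using that \<open>k1 = Some s\<close> Some AT[OF t] ATT[OF s t] enc_lt[OF AT[OF t]]
            enc_nth[OF AT[OF t]]
          by (simp add: phi_def)
      qed
    qed
    have "{x\<in>X. phi (adjoin_mult k1 k2) x \<noteq> (phi k1 \<circ> phi k2) x} \<subseteq> {..<n}"
      using eq by (auto simp: not_less[symmetric])
    then have "ham_dist X (phi (adjoin_mult k1 k2)) (phi k1 \<circ> phi k2) \<le> real n / real (card X)"
      by (rule hd_le[OF fX(1)])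
    then show "ham_dist X (phi (adjoin_mult k1 k2)) (phi k1 \<circ> phi k2) \<le> e"
      using ar fX(2) by simp
  qed
  have one: "ham_dist X (phi None) id \<le> e"
    using e by (simp add: ham_dist_def phi_def)
  have inj: "\<forall>k1\<in>K. \<forall>k2\<in>K. k1 \<noteq> k2 \<longrightarrow> ham_dist X (phi k1) (phi k2) \<ge> 1 - e"
  proof (intro ballI impI)
    fix k1 k2 assume k: "k1 \<in> K" "k2 \<in> K" "k1 \<noteq> k2"
    have ne: "phi k1 x \<noteq> phi k2 x" if "n \<le> x" for x
    proof (cases k1)
      case None
      then obtain t where t: "k2 = Some t" using k by (cases k2) auto
      then show ?thesis using None that AT[of t] k enc_lt[OF AT[of t]] by (auto simp: phi_def)
    next
      case (Some s)
      show ?thesis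
      proof (cases k2)
        case None then show ?thesis using Some that AT[of s] k enc_lt[OF AT[of s]] by (auto simp: phi_def)
      next
        case (Some t)
        have s: "Some s \<in> K" and t: "Some t \<in> K" using k \<open>k1 = Some s\<close> Some by auto
        have "s \<noteq> t" using k \<open>k1 = Some s\<close> Some by auto
        then have "enc s \<noteq> enc t" using enc_nth[OF AT[OF s]] enc_nth[OF AT[OF t]] by metis
        then show ?thesis using that \<open>k1 = Some s\<close> Some AT[OF s] AT[OF t] by (simp add: phi_def)
      qed
    qed
    have "{n..<n+N} \<subseteq> {x\<in>X. phi k1 x \<noteq> phi k2 x}" using ne unfolding X_def by auto
    then have "ham_dist X (phi k1) (phi k2) \<ge> real (card {n..<n+N}) / real (card X)"
      by (rule hd_ge[OF fX(1)])
    then show "ham_dist X (phi k1) (phi k2) \<ge> 1 - e" using ar fX(2) by simp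
  qed
  show "\<exists>X \<phi>. finite X \<and> X \<noteq> {} \<and> (\<forall>m. \<phi> m ` X \<subseteq> X) \<and>
          (\<forall>k1\<in>K. \<forall>k2\<in>K. ham_dist X (\<phi> (adjoin_mult k1 k2)) (\<phi> k1 \<circ> \<phi> k2) \<le> e) \<and>
          ham_dist X (\<phi> None) id \<le> e \<and>
          (\<forall>k1\<in>K. \<forall>k2\<in>K. k1 \<noteq> k2 \<longrightarrow> ham_dist X (\<phi> k1) (\<phi> k2) \<ge> 1 - e)"
    using fX(1) neX into mult one inj by blast
qed

end
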